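(* Let $C\subseteq H$ be nonempty, closed and convex, take $B=N_C$ in Algorithm 3.1, and suppose Assumption 3.1 holds, with $p_n\ge0$, $\mu_n\ge 0$ and $\sum_n p_n<\infty$. Let $\{w_n\},\{y_n\}$ be generated by Algorithm 3.1. If $\lim_{n\to\infty}\|w_n-y_n\|=0$ and $\{w_n\}$ converges weakly to some $z\in H$, then $z\in S$.
   Context: Let $H$ be a real Hilbert space, $A:H\to H$ a single-valued mapping and $B:H\to 2^H$ a set-valued mapping, and let $\Omega:=(A+B)^{-1}(0)=\{x\in H:\ 0\in Ax+Bx\}$. Algorithm 3.1 is the following iteration. Fix $x_0,x_1\in H$, $\mu\in(0,1)$, $\lambda_1>0$, real sequences $\{\alpha_n\},\{\beta_n\},\{\theta_n\}$ and nonnegative real sequences $\{\mu_n\},\{p_n\}$. For $n=1,2,\dots$ compute $w_n=x_n+\alpha_n(x_n-x_{n-1})$, $z_n=x_n+\beta_n(x_n-x_{n-1})$, $y_n=(I+\lambda_nB)^{-1}(I-\lambda_nA)w_n$, and set $\lambda_{n+1}=\min\{(\mu_n+\mu)\|w_n-y_n\|/\|Aw_n-Ay_n\|,\ \lambda_n+p_n\}$ if $Aw_n\neq Ay_n$, and $\lambda_{n+1}=\lambda_n+p_n$ otherwise. If $w_n=y_n$ the algorithm stops (then $y_n\in\Omega$). Otherwise set $x_{n+1}=(1-\theta_n)z_n+\theta_n\big(y_n-\lambda_n(Ay_n-Aw_n)\big)$ and continue. Here $I$ is the identity and $(I+\lambda B)^{-1}$ is the resolvent of $B$. Throughout, it is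 assumed that the algorithm does not stop, so that infinite sequences $\{x_n\},\{w_n\},\{z_n\},\{y_n\},\{\lambda_n\}$ are generated. $N_C(x)=\{z\in H:\langle z,y-x\rangle\le0\ \forall y\in C\}$ for $x\in C$ and $N_C(x)=\emptyset$ otherwise is the normal cone; $P_C$ is the metric projection onto $C$, and $(I+\lambda N_C)^{-1}=P_C$. $S$ denotes the solution set of the variational inequality VI$(A,C)$: find $x^*\in C$ with $\langle Ax^*,y-x^*\rangle\ge0$ for all $y\in C$. Assumption 3.1: (i) $S\neq\emptyset$; (ii) $A$ is pseudomonotone (i.e. $\langle Ax,y-x\rangle\ge0$ implies $\langle Ay,y-x\rangle\ge0$) and Lipschitz continuous on $H$, and whenever $x_n\rightharpoonup w^*$ weakly in $H$, one has $\|Aw^*\|\le\liminf_{n\to\infty}\|Ax_n\|$. *)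

theory Defs
  imports "HOL-Analysis.Analysis"
begin

definition weakly_converges :: "(nat \<Rightarrow> 'a::real_inner) \<Rightarrow> 'a \<Rightarrow> bool" where
  "weakly_converges x z \<longleftrightarrow> (\<forall>v. ((\<lambda>n. inner (x n) v) \<longlonglongrightarrow> inner z v))"

definition pseudomonotone :: "('a::real_inner \<Rightarrow> 'a) \<Rightarrow> bool" where
  "pseudomonotone A \<longleftrightarrow>
     (\<forall>x y. inner (A x) (y - x) \<ge> 0 \<longrightarrow> inner (A y) (y - x) \<ge> 0)"

definition VI_sol :: "('a::real_inner \<Rightarrow> 'a) \<Rightarrow> 'a set \<Rightarrow> 'a set" where
  "VI_sol A C = {x \<in> C. \<forall>y\<in>C. inner (A x) (y - x) \<ge> 0}"

text \<open>Metric projection onto C (the resolvent of the normal cone N_C).\<close>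
definition proj :: "'a::real_inner set \<Rightarrow> 'a \<Rightarrow> 'a" where
  "proj C x = (THE a. a \<in> C \<and> (\<forall>b\<in>C. dist x a \<le> dist x b))"

end

theory Submission
  imports Defs "HOL-Analysis.Analysis"
begin

lemma min_char:
  fixes C :: "'a::real_inner set"
  assumes cv: "convex C" and aC: "a \<in> C" and cC: "c \<in> C"
    and mn: "\<forall>b\<in>C. dist u a \<le> dist u b"
  shows "inner (u - a) (c - a) \<le> 0"
proof (rule ccontr)
  assume "\<not> ?thesis"
  hence g: "inner (u - a) (c - a) > 0" by simp
  define g where "g = inner (u - a) (c - a)"
  define q where "q = inner (c - a) (c - a)"
  have q0: "q \<ge> 0" unfolding q_def by simp
  define t where "t = min 1 (g / (q + 1))"
  have t0: "0 < t" "t \<le> 1" using g q0 unfolding t_def g_def by auto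
  have "a + t *\<^sub>R (c - a) \<in> C"
  proof -
    have "(1 - t) *\<^sub>R a + t *\<^sub>R c \<in> C" using cv aC cC t0 by (simp add: convex_def)
    moreover have "(1 - t) *\<^sub>R a + t *\<^sub>R c = a + t *\<^sub>R (c - a)" by (simp add: algebra_simps)
    ultimately show ?thesis by simp
  qed
  hence "dist u a \<le> dist u (a + t *\<^sub>R (c - a))" using mn by blast
  hence "norm (u - a) \<le> norm ((u - a) - t *\<^sub>R (c - a))" by (simp add: dist_norm algebra_simps)
  hence "inner (u - a) (u - a) \<le> inner ((u - a) - t *\<^sub>R (c - a)) ((u - a) - t *\<^sub>R (c - a))"
    by (simp add: norm_eq_sqrt_inner)
  also have "\<dots> = inner (u - a) (u - a) - 2 * t * g + t * t * q"
    unfolding g_def q_def by (simp add: inner_diff_left inner_diff_right algebra_simps inner_commute)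
  finally have "2 * g \<le> t * q" using t0 by (simp add: algebra_simps)
  moreover have "t * q \<le> g / (q + 1) * q" unfolding t_def by (rule mult_right_mono[OF min.cobounded2 q0])
  moreover have "g / (q + 1) * q < g" using q0 g unfolding g_def[symmetric]
    by (simp add: field_simps)
  ultimately show False using g unfolding g_def[symmetric] by linarith
qed

lemma proj_exists:
  fixes C :: "'a::{real_inner,complete_space} set"
  assumes ne: "C \<noteq> {}" and cl: "closed C" and cv: "convex C"
  shows "\<exists>a\<in>C. \<forall>b\<in>C. dist u a \<le> dist u b"
proof -
  define d where "d = infdist u C"
  have d0: "d \<ge> 0" unfolding d_def by (simp add: infdist_nonneg)
  have "\<exists>c\<in>C. dist u c < d + 1 / (real n + 1)" for n
  proof -
    have "infdist u C < d + 1 / (real n + 1)" unfolding d_def by simp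
    moreover have "bdd_below (dist u ` C)" by (rule bdd_belowI[of _ 0]) auto
    ultimately show ?thesis unfolding infdist_notempty[OF ne]
      using cINF_less_iff[OF ne] by blast
  qed
  then obtain c where cC: "\<And>n. c n \<in> C" and cd: "\<And>n. dist u (c n) < d + 1 / (real n + 1)"
    by metis
  have dle: "d \<le> dist u b" if "b \<in> C" for b unfolding d_def using that by (simp add: infdist_le)
  have key: "norm (c n - c m) ^ 2 \<le> 2 * (2 * d + 1) * (1 / (real n + 1) + 1 / (real m + 1))" for n m
  proof -
    define en where "en = 1 / (real n + 1)"
    define em where "em = 1 / (real m + 1)"
    have en: "0 < en" "en \<le> 1" unfolding en_def by (auto simp: field_simps)
    have em: "0 < em" "em \<le> 1" unfolding em_def by (auto simp: field_simps)
    have mid: "(1/2) *\<^sub>R c n + (1/2) *\<^sub>R c m \<in> C"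
      using cv cC by (simp add: convex_def)
    have "d \<le> norm (u - ((1/2) *\<^sub>R c n + (1/2) *\<^sub>R c m))" using dle[OF mid] by (simp add: dist_norm)
    hence m2: "d^2 \<le> norm (u - ((1/2) *\<^sub>R c n + (1/2) *\<^sub>R c m))^2" using d0 by (simp add: power_mono)
    have par: "norm (c n - c m)^2 = 2 * norm (u - c n)^2 + 2 * norm (u - c m)^2
       - 4 * norm (u - ((1/2) *\<^sub>R c n + (1/2) *\<^sub>R c m))^2"
      by (simp add: power2_norm_eq_inner inner_diff_left inner_diff_right inner_add_left inner_add_right
          algebra_simps inner_commute)
    have a1: "norm (u - c n) \<le> d + en" using cd[of n] unfolding en_def by (simp add: dist_norm)
    have a2: "norm (u - c m) \<le> d + em" using cd[of m] unfolding em_def by (simp add: dist_norm)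
    have b1: "norm (u - c n)^2 \<le> (d + en)^2" using a1 by (simp add: power_mono)
    have b2: "norm (u - c m)^2 \<le> (d + em)^2" using a2 by (simp add: power_mono)
    have "(d + en)^2 \<le> d^2 + (2*d+1) * en" using en d0 by (simp add: power2_eq_square algebra_simps mult_left_mono)
    moreover have "(d + em)^2 \<le> d^2 + (2*d+1) * em" using em d0 by (simp add: power2_eq_square algebra_simps mult_left_mono)
    ultimately show ?thesis using par b1 b2 m2 unfolding en_def[symmetric] em_def[symmetric]
      by (simp add: algebra_simps)
  qed
  have "Cauchy c"
  proof (rule metric_CauchyI)
    fix e :: real assume e: "e > 0"
    have e2: "e^2 > 0" using e by simp
    obtain N :: nat where N: "4 * (2 * d + 1) / e^2 < real N" using reals_Archimedean2 by blast
    have NN: "4 * (2 * d + 1) < e^2 * real N"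
      using N e2 by (simp add: divide_less_eq mult.commute)
    show "\<exists>M. \<forall>m\<ge>M. \<forall>n\<ge>M. dist (c m) (c n) < e"
    proof (intro exI allI impI)
      fix m n assume mN: "m \<ge> N" and nN: "n \<ge> N"
      have r1: "1 / (real m + 1) \<le> 1 / (real N + 1)" using mN by (intro divide_left_mono) auto
      have r2: "1 / (real n + 1) \<le> 1 / (real N + 1)" using nN by (intro divide_left_mono) auto
      have "2 * (2 * d + 1) * (1 / (real m + 1) + 1 / (real n + 1)) \<le> 2 * (2 * d + 1) * (2 / (real N + 1))"
        using r1 r2 d0 by (intro mult_left_mono) auto
      hence "norm (c m - c n)^2 \<le> 2 * (2 * d + 1) * (2 / (real N + 1))"
        using key[of m n] by linarith
      also have "\<dots> = 4 * (2 * d + 1) / (real N + 1)" by simp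
      also have "\<dots> < e^2"
      proof -
        have "e^2 * (real N + 1) = e^2 * real N + e^2" by (simp add: algebra_simps)
        hence "4 * (2 * d + 1) < e^2 * (real N + 1)" using NN e2 by linarith
        thus ?thesis by (simp add: divide_less_eq)
      qed
      finally have "norm (c m - c n)^2 < e^2" .
      hence "norm (c m - c n) < e" using e by (simp add: power_less_imp_less_base)
      thus "dist (c m) (c n) < e" by (simp add: dist_norm)
    qed
  qed
  then obtain a where ca: "c \<longlonglongrightarrow> a" using Cauchy_convergent_iff convergent_def by blast
  have aC: "a \<in> C" using cl cC ca closed_sequentially by blast
  have "dist u a \<le> d"
  proof -
    have l1: "(\<lambda>n. dist u (c n)) \<longlonglongrightarrow> dist u a" using ca by (intro tendsto_intros)
    have l0: "(\<lambda>n. 1 / (real n + 1)) \<longlonglongrightarrow> 0"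
      using LIMSEQ_inverse_real_of_nat by (simp add: inverse_eq_divide add.commute)
    have l2: "(\<lambda>n. d + 1 / (real n + 1)) \<longlonglongrightarrow> d + 0"
      by (intro tendsto_intros l0)
    show ?thesis using LIMSEQ_le[OF l1 l2] cd less_imp_le by auto
  qed
  thus ?thesis using aC dle by force
qed

lemma proj_props:
  fixes C :: "'a::{real_inner,complete_space} set"
  assumes ne: "C \<noteq> {}" and cl: "closed C" and cv: "convex C"
  shows "proj C u \<in> C \<and> (\<forall>c\<in>C. inner (u - proj C u) (c - proj C u) \<le> 0)"
proof -
  obtain a where a: "a \<in> C" "\<forall>b\<in>C. dist u a \<le> dist u b" using proj_exists[OF assms] by blast
  have uniq: "b = a" if b: "b \<in> C" "\<forall>b'\<in>C. dist u b \<le> dist u b'" for b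
  proof -
    have "inner (u - a) (b - a) \<le> 0" using min_char[OF cv a(1) b(1) a(2)] .
    moreover have "inner (u - b) (a - b) \<le> 0" using min_char[OF cv b(1) a(1) b(2)] .
    ultimately have "inner (b - a) (b - a) \<le> 0"
      by (simp add: inner_diff_left inner_diff_right inner_commute algebra_simps)
    hence "inner (b - a) (b - a) = 0" using inner_ge_zero[of "b - a"] by linarith
    thus ?thesis by simp
  qed
  have "proj C u = a" unfolding proj_def
  proof (rule the_equality)
    show "a \<in> C \<and> (\<forall>b\<in>C. dist u a \<le> dist u b)" using a by blast
    fix b assume "b \<in> C \<and> (\<forall>b'\<in>C. dist u b \<le> dist u b')"
    thus "b = a" using uniq by blast
  qed
  thus ?thesis using a(1) min_char[OF cv a(1) _ a(2)] by simp
qed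

lemma weak_bounded:
  fixes w :: "nat \<Rightarrow> 'a::{real_inner,complete_space}"
  assumes wc: "weakly_converges w z"
  shows "\<exists>M. \<forall>n. norm (w n) \<le> M"
proof -
  define F where "F k = {v::'a. \<forall>n. \<bar>inner (w n) v\<bar> \<le> real k}" for k :: nat
  have clF: "closed (F k)" for k
  proof -
    have "F k = (\<Inter>n. {v. \<bar>inner (w n) v\<bar> \<le> real k})" unfolding F_def by auto
    moreover have "closed {v. \<bar>inner (w n) v\<bar> \<le> real k}" for n
      by (intro closed_Collect_le continuous_intros)
    ultimately show ?thesis by auto
  qed
  have cov: "\<exists>k. v \<in> F k" for v
  proof -
    have "convergent (\<lambda>n. inner (w n) v)" using wc unfolding weakly_converges_def convergent_def by blast
    hence "Bseq (\<lambda>n. inner (w n) v)" by (rule convergent_imp_Bseq)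
    then obtain K where K: "\<forall>n. norm (inner (w n) v) \<le> K" by (auto elim: BseqE)
    have "\<forall>n. \<bar>inner (w n) v\<bar> \<le> real (nat \<lceil>K\<rceil>)"
    proof
      fix n
      have "\<bar>inner (w n) v\<bar> \<le> K" using K by simp
      also have "K \<le> real (nat \<lceil>K\<rceil>)" by linarith
      finally show "\<bar>inner (w n) v\<bar> \<le> real (nat \<lceil>K\<rceil>)" .
    qed
    thus ?thesis unfolding F_def by blast
  qed
  have "\<exists>k. interior (F k) \<noteq> {}"
  proof (rule ccontr)
    assume "\<not> ?thesis"
    hence emp: "\<And>k. interior (F k) = {}" by blast
    have "euclidean interior_of \<Union>(range F) = {}"
    proof (rule Baire_category_alt)
      show "completely_metrizable_space (euclidean::'a topology) \<or> locally_compact_space (euclidean::'a topology) \<and> regular_space (euclidean::'a topology)"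
        using completely_metrizable_space_euclidean by blast
      show "countable (range F)" by simp
      fix T assume "T \<in> range F"
      then obtain k where "T = F k" by blast
      thus "closedin euclidean T \<and> euclidean interior_of T = {}" using clF emp by simp
    qed
    moreover have "\<Union>(range F) = UNIV" using cov by blast
    ultimately show False by simp
  qed
  then obtain k v0 where v0: "v0 \<in> interior (F k)" by blast
  then obtain r where r: "r > 0" "ball v0 r \<subseteq> F k"
    by (meson open_contains_ball open_interior interior_subset subset_trans)
  have "norm (w n) \<le> 4 * real k / r" for n
  proof (cases "w n = 0")
    case True thus ?thesis using r by simp
  next
    case False
    hence nw: "norm (w n) > 0" by simp
    define u where "u = (r / 2 / norm (w n)) *\<^sub>R w n"
    have nu: "norm u = r / 2" unfolding u_def using nw r by simp
    have "v0 + u \<in> ball v0 r" using nu r by (simp add: dist_norm)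
    hence "v0 + u \<in> F k" using r by blast
    hence a1: "\<bar>inner (w n) (v0 + u)\<bar> \<le> real k" unfolding F_def by blast
    have "v0 \<in> F k" using r by auto
    hence a2: "\<bar>inner (w n) v0\<bar> \<le> real k" unfolding F_def by blast
    have "inner (w n) u = r / 2 * norm (w n)"
      unfolding u_def using nw by (simp add: power2_norm_eq_inner[symmetric] power2_eq_square)
    moreover have "inner (w n) u \<le> 2 * real k" using a1 a2 by (simp add: inner_add_right)
    ultimately have "r * norm (w n) \<le> 4 * real k" by simp
    thus ?thesis using r by (simp add: field_simps)
  qed
  thus ?thesis by blast
qed

theorem proposition3p2:
  fixes A :: "'a::{real_inner, complete_space} \<Rightarrow> 'a"
    and C :: "'a set"
    and x w zz y :: "nat \<Rightarrow> 'a"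
    and lam alpha beta theta mus p :: "nat \<Rightarrow> real"
    and mu lam1 L :: real
    and zs :: 'a
  assumes C_ne: "C \<noteq> {}" and C_closed: "closed C" and C_convex: "convex C"
    and S_ne: "VI_sol A C \<noteq> {}"
    and A_pm: "pseudomonotone A"
    and A_lip: "L-lipschitz_on UNIV A"
    and A_wlsc: "\<And>u v. weakly_converges u v \<Longrightarrow>
                   ereal (norm (A v)) \<le> liminf (\<lambda>n. ereal (norm (A (u n))))"
    and mu_rng: "0 < mu" "mu < 1"
    and lam1_pos: "lam1 > 0"
    and mus_nonneg: "\<And>n. mus n \<ge> 0"
    and p_nonneg: "\<And>n. p n \<ge> 0"
    and p_sum: "summable p"
    and lam_1: "lam 1 = lam1"
    and w_def: "\<And>n. n \<ge> 1 \<Longrightarrow> w n = x n + alpha n *\<^sub>R (x n - x (n - 1))"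
    and z_def: "\<And>n. n \<ge> 1 \<Longrightarrow> zz n = x n + beta n *\<^sub>R (x n - x (n - 1))"
    and y_def: "\<And>n. n \<ge> 1 \<Longrightarrow> y n = proj C (w n - lam n *\<^sub>R A (w n))"
    and lam_step: "\<And>n. n \<ge> 1 \<Longrightarrow> lam (Suc n) =
        (if A (w n) \<noteq> A (y n)
         then min ((mus n + mu) * norm (w n - y n) / norm (A (w n) - A (y n))) (lam n + p n)
         else lam n + p n)"
    and no_stop: "\<And>n. n \<ge> 1 \<Longrightarrow> w n \<noteq> y n"
    and x_step: "\<And>n. n \<ge> 1 \<Longrightarrow> x (Suc n) =
        (1 - theta n) *\<^sub>R zz n + theta n *\<^sub>R (y n - lam n *\<^sub>R (A (y n) - A (w n)))"
    and wy_lim: "(\<lambda>n. norm (w n - y n)) \<longlonglongrightarrow> 0"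
    and w_weak: "weakly_converges w zs"
  shows "zs \<in> VI_sol A C"
proof -
  have Lnn: "L \<ge> 0" using A_lip lipschitz_on_nonneg by blast
  have Alip: "\<And>a b. norm (A a - A b) \<le> L * norm (a - b)"
    using lipschitz_on_normD[OF A_lip] by simp
  define lmin where "lmin = min lam1 (mu / (L + 1))"
  have lmin_pos: "lmin > 0" unfolding lmin_def using lam1_pos mu_rng Lnn by simp
  have lam_lb: "lam n \<ge> lmin" if "n \<ge> 1" for n
    using that
  proof (induction n rule: dec_induct)
    case base thus ?case using lam_1 unfolding lmin_def by simp
  next
    case (step n)
    show ?case
    proof (cases "A (w n) = A (y n)")
      case True
      thus ?thesis using lam_step[OF step(1)] step(3) p_nonneg[of n] by simp
    next
      case False
      define e where "e = norm (w n - y n)"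
      define nA where "nA = norm (A (w n) - A (y n))"
      have e0: "e > 0" unfolding e_def using no_stop[OF step(1)] by simp
      have nA0: "nA > 0" unfolding nA_def using False by simp
      have "nA \<le> L * e" unfolding nA_def e_def by (rule Alip)
      also have "\<dots> \<le> (L + 1) * e" using e0 by simp
      finally have nAle: "nA \<le> (L + 1) * e" .
      have "mu * e / ((L + 1) * e) \<le> (mus n + mu) * e / nA"
        by (rule frac_le) (use mus_nonneg[of n] mu_rng e0 nA0 nAle in auto)
      moreover have "mu * e / ((L + 1) * e) = mu / (L + 1)" using e0 by simp
      ultimately have X: "mu / (L + 1) \<le> (mus n + mu) * e / nA" by simp
      have "lam (Suc n) = min ((mus n + mu) * e / nA) (lam n + p n)"
        using lam_step[OF step(1)] False unfolding e_def nA_def by simp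
      thus ?thesis using X step(3) p_nonneg[of n] unfolding lmin_def by simp
    qed
  qed
  have yC: "y n \<in> C" and ychar: "\<And>c. c \<in> C \<Longrightarrow> inner ((w n - lam n *\<^sub>R A (w n)) - y n) (c - y n) \<le> 0"
    if "n \<ge> 1" for n
    using proj_props[OF C_ne C_closed C_convex, of "w n - lam n *\<^sub>R A (w n)"] y_def[OF that] by auto
  obtain M where M: "\<And>n. norm (w n) \<le> M" using weak_bounded[OF w_weak] by blast
  have M0: "M \<ge> 0" using M[of 0] norm_ge_zero order_trans by blast
  define KA where "KA = norm (A 0) + L * M"
  have KA: "norm (A (w n)) \<le> KA" for n
  proof -
    have "norm (A (w n) - A 0) \<le> L * norm (w n)" using Alip[of "w n" 0] by simp
    also have "\<dots> \<le> L * M" using M[of n] Lnn by (simp add: mult_left_mono)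
    finally show ?thesis unfolding KA_def by (smt (verit) norm_triangle_ineq2)
  qed
  have wy0: "(\<lambda>n. w n - y n) \<longlonglongrightarrow> 0" using wy_lim tendsto_norm_zero_iff by blast
  have zsC: "zs \<in> C"
  proof -
    define q where "q = proj C zs"
    have q: "q \<in> C" "\<And>c. c \<in> C \<Longrightarrow> inner (zs - q) (c - q) \<le> 0"
      using proj_props[OF C_ne C_closed C_convex, of zs] unfolding q_def by auto
    have l1: "(\<lambda>n. inner (w n) (zs - q)) \<longlonglongrightarrow> inner zs (zs - q)"
      using w_weak unfolding weakly_converges_def by blast
    have l2: "(\<lambda>n. inner (w n - y n) (zs - q)) \<longlonglongrightarrow> inner 0 (zs - q)"
      by (intro tendsto_intros wy0)
    have "(\<lambda>n. inner (w n) (zs - q) - inner (w n - y n) (zs - q) - inner q (zs - q))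
        \<longlonglongrightarrow> inner zs (zs - q) - inner 0 (zs - q) - inner q (zs - q)"
      by (intro tendsto_intros l1 l2)
    hence l3: "(\<lambda>n. inner (zs - q) (y n - q)) \<longlonglongrightarrow> inner (zs - q) (zs - q)"
      by (simp add: inner_diff_left inner_diff_right inner_commute algebra_simps)
    have "eventually (\<lambda>n. inner (zs - q) (y n - q) \<le> 0) sequentially"
      using eventually_ge_at_top[of 1] by eventually_elim (use q yC in auto)
    hence "inner (zs - q) (zs - q) \<le> 0" using tendsto_upperbound[OF l3] by simp
    hence "inner (zs - q) (zs - q) = 0" using inner_ge_zero[of "zs - q"] by linarith
    thus ?thesis using q(1) by simp
  qed
  show ?thesis
  proof (cases "A zs = 0")
    case True
    thus ?thesis using zsC unfolding VI_sol_def by simp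
  next
    case False
    define c where "c = norm (A zs) / 2"
    have c0: "c > 0" unfolding c_def using False by simp
    have evc: "eventually (\<lambda>n. c < norm (A (w n))) sequentially"
    proof -
      have "ereal c < ereal (norm (A zs))" unfolding c_def using False by simp
      also have "\<dots> \<le> liminf (\<lambda>n. ereal (norm (A (w n))))" by (rule A_wlsc[OF w_weak])
      finally have "ereal c < liminf (\<lambda>n. ereal (norm (A (w n))))" .
      from less_LiminfD[OF this] show ?thesis by simp
    qed
    have minty: "inner (A x) (x - zs) \<ge> 0" if xC: "x \<in> C" for x
    proof -
      define D where "D = (norm x + M + 1) / lmin + KA"
      have D0: "D \<ge> 0"
      proof -
        have "KA \<ge> 0" using KA[of 0] norm_ge_zero[of "A (w 0)"] by linarith
        moreover have "(norm x + M + 1) / lmin \<ge> 0" using lmin_pos M0 by simp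
        ultimately show ?thesis unfolding D_def by simp
      qed
      have lower: "inner (A (w n)) (x - w n) \<ge> - D * norm (w n - y n)"
        if n1: "n \<ge> 1" and e1: "norm (w n - y n) \<le> 1" for n
      proof -
        define e where "e = norm (w n - y n)"
        define l where "l = lam n"
        have l0: "l \<ge> lmin" unfolding l_def using lam_lb[OF n1] .
        have lpos: "l > 0" using l0 lmin_pos by simp
        have "inner ((w n - l *\<^sub>R A (w n)) - y n) (x - y n) \<le> 0"
          unfolding l_def by (rule ychar[OF n1 xC])
        hence i1: "inner (w n - y n) (x - y n) \<le> l * inner (A (w n)) (x - y n)"
          by (simp add: inner_diff_left algebra_simps)
        have ny: "norm (y n) \<le> M + 1"
        proof -
          have "norm (y n) \<le> norm (w n) + norm (w n - y n)" using norm_triangle_ineq4[of "w n" "w n - y n"] by simp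
          thus ?thesis using M[of n] e1 by simp
        qed
        have nxy: "norm (x - y n) \<le> norm x + M + 1" using ny norm_triangle_ineq4[of x "y n"] by simp
        have "- (e * (norm x + M + 1)) \<le> - (e * norm (x - y n))"
          using nxy unfolding e_def by (simp add: mult_left_mono)
        also have "- (e * norm (x - y n)) \<le> inner (w n - y n) (x - y n)"
          unfolding e_def using Cauchy_Schwarz_ineq2[of "w n - y n" "x - y n"] by linarith
        finally have i2: "- (e * (norm x + M + 1)) \<le> l * inner (A (w n)) (x - y n)" using i1 by linarith
        have "- (e * (norm x + M + 1)) / lmin \<le> - (e * (norm x + M + 1)) / l"
        proof -
          have "0 \<le> e * (norm x + M + 1)" unfolding e_def using M0 by simp
          hence "e * (norm x + M + 1) / l \<le> e * (norm x + M + 1) / lmin"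
            using l0 lmin_pos by (intro divide_left_mono) auto
          thus ?thesis by simp
        qed
        also have "- (e * (norm x + M + 1)) / l \<le> inner (A (w n)) (x - y n)"
          by (subst pos_divide_le_eq[OF lpos]) (use i2 in \<open>simp add: mult.commute\<close>)
        finally have i3: "- (e * (norm x + M + 1)) / lmin \<le> inner (A (w n)) (x - y n)" .
        have i4: "- (KA * e) \<le> inner (A (w n)) (y n - w n)"
        proof -
          have "\<bar>inner (A (w n)) (y n - w n)\<bar> \<le> norm (A (w n)) * norm (y n - w n)"
            by (rule Cauchy_Schwarz_ineq2)
          also have "\<dots> \<le> KA * e" unfolding e_def using KA[of n]
            by (simp add: norm_minus_commute mult_right_mono)
          finally show ?thesis by linarith
        qed
        have "inner (A (w n)) (x - w n) = inner (A (w n)) (x - y n) + inner (A (w n)) (y n - w n)"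
          by (simp add: inner_diff_right)
        moreover have "- D * e = - (e * (norm x + M + 1)) / lmin - KA * e"
          unfolding D_def using lmin_pos by (simp add: field_simps)
        ultimately show ?thesis using i3 i4 unfolding e_def by linarith
      qed
      have evlow: "eventually (\<lambda>n. inner (A (w n)) (x - w n) \<ge> - \<epsilon>) sequentially" if ep: "\<epsilon> > 0" for \<epsilon>
      proof -
        have "eventually (\<lambda>n. norm (w n - y n) < min 1 (\<epsilon> / (D + 1))) sequentially"
        proof -
          have "0 < min 1 (\<epsilon> / (D + 1))" using ep D0 by simp
          from order_tendstoD(2)[OF wy_lim this] show ?thesis .
        qed
        with eventually_ge_at_top[of 1] show ?thesis
        proof eventually_elim
          case (elim n)
          have "D * norm (w n - y n) \<le> (D + 1) * norm (w n - y n)" by (simp add: algebra_simps)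
          also have "\<dots> \<le> (D + 1) * (\<epsilon> / (D + 1))" using elim D0 by (intro mult_left_mono) auto
          also have "\<dots> = \<epsilon>" using D0 by simp
          finally show ?case using lower[of n] elim by simp
        qed
      qed
      define K0 where "K0 = (L * (norm x + 1 / c + M) + norm (A x)) / c"
      have K00: "K0 \<ge> 0" unfolding K0_def using Lnn c0 M0 by simp
      have limx: "(\<lambda>n. inner (A x) (x - w n)) \<longlonglongrightarrow> inner (A x) (x - zs)"
      proof -
        have "(\<lambda>n. inner (w n) (A x)) \<longlonglongrightarrow> inner zs (A x)"
          using w_weak unfolding weakly_converges_def by blast
        hence "(\<lambda>n. inner (A x) x - inner (w n) (A x)) \<longlonglongrightarrow> inner (A x) x - inner zs (A x)"
          by (rule tendsto_diff[OF tendsto_const])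
        moreover have "\<And>n. inner (A x) x - inner (w n) (A x) = inner (A x) (x - w n)"
          by (simp add: inner_diff_right inner_commute[of "w _" "A x"])
        moreover have "inner (A x) x - inner zs (A x) = inner (A x) (x - zs)"
          by (simp add: inner_diff_right inner_commute[of zs "A x"])
        ultimately show ?thesis by simp
      qed
      have stepb: "inner (A x) (x - zs) \<ge> - \<epsilon> * K0" if ep: "\<epsilon> > 0" "\<epsilon> \<le> 1" for \<epsilon>
      proof -
        have "eventually (\<lambda>n. inner (A x) (x - w n) \<ge> - \<epsilon> * K0) sequentially"
          using evlow[OF ep(1)] evc
        proof eventually_elim
          case (elim n)
          define a where "a = A (w n)"
          define na where "na = norm a"
          have na0: "na > c" using elim unfolding na_def a_def by simp
          have nap: "na > 0" using na0 c0 by simp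
          define v where "v = (\<epsilon> / na^2) *\<^sub>R a"
          have iav: "inner a v = \<epsilon>" unfolding v_def na_def using nap unfolding na_def
            by (simp add: power2_norm_eq_inner[symmetric])
          have nv: "norm v = \<epsilon> / na" unfolding v_def na_def using nap ep unfolding na_def
            by (simp add: power2_eq_square)
          have nvc: "norm v \<le> \<epsilon> / c" unfolding nv using na0 c0 ep by (intro divide_left_mono) auto
          have nvc1: "norm v \<le> 1 / c" using nvc ep c0 by (smt (verit) divide_right_mono)
          have "inner a ((x + v) - w n) \<ge> 0"
            using elim iav unfolding a_def by (simp add: inner_diff_right inner_add_right)
          hence pm: "inner (A (x + v)) ((x + v) - w n) \<ge> 0"
            using A_pm unfolding pseudomonotone_def a_def by blast
          have ntri: "norm ((x + v) - w n) \<le> norm x + 1 / c + M"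
          proof -
            have "norm ((x + v) - w n) \<le> norm x + norm v + norm (w n)"
              by (smt (verit) norm_triangle_ineq norm_triangle_ineq4)
            thus ?thesis using nvc1 M[of n] by simp
          qed
          have t1: "\<bar>inner (A (x + v) - A x) ((x + v) - w n)\<bar> \<le> L * (\<epsilon> / c) * (norm x + 1 / c + M)"
          proof -
            have "\<bar>inner (A (x + v) - A x) ((x + v) - w n)\<bar> \<le> norm (A (x + v) - A x) * norm ((x + v) - w n)"
              by (rule Cauchy_Schwarz_ineq2)
            also have "\<dots> \<le> (L * (\<epsilon> / c)) * (norm x + 1 / c + M)"
            proof (rule mult_mono)
              have "norm (A (x + v) - A x) \<le> L * norm v" using Alip[of "x + v" x] by simp
              also have "\<dots> \<le> L * (\<epsilon> / c)" using mult_left_mono[OF nvc Lnn] by simp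
              finally show "norm (A (x + v) - A x) \<le> L * (\<epsilon> / c)" .
              show "norm ((x + v) - w n) \<le> norm x + 1 / c + M" by (rule ntri)
              show "0 \<le> L * (\<epsilon> / c)" using Lnn ep c0 by simp
              show "0 \<le> norm (x + v - w n)" by simp
            qed
            finally show ?thesis .
          qed
          have t2: "\<bar>inner (A x) v\<bar> \<le> norm (A x) * (\<epsilon> / c)"
          proof -
            have "\<bar>inner (A x) v\<bar> \<le> norm (A x) * norm v" by (rule Cauchy_Schwarz_ineq2)
            also have "\<dots> \<le> norm (A x) * (\<epsilon> / c)" using mult_left_mono[OF nvc norm_ge_zero] by simp
            finally show ?thesis .
          qed
          have dec: "inner (A x) (x - w n) = inner (A (x + v)) ((x + v) - w n)
              - inner (A (x + v) - A x) ((x + v) - w n) - inner (A x) v"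
            by (simp add: inner_diff_left inner_diff_right inner_add_right algebra_simps)
          have "\<epsilon> * K0 = L * (\<epsilon> / c) * (norm x + 1 / c + M) + norm (A x) * (\<epsilon> / c)"
            unfolding K0_def using c0 by (simp add: field_simps)
          thus ?case using dec pm t1 t2 by linarith
        qed
        thus ?thesis using tendsto_lowerbound[OF limx] by simp
      qed
      show ?thesis
      proof (rule ccontr)
        assume "\<not> ?thesis"
        hence g: "inner (A x) (x - zs) < 0" by simp
        define \<epsilon> where "\<epsilon> = min 1 (- inner (A x) (x - zs) / (2 * (K0 + 1)))"
        have ep: "\<epsilon> > 0" "\<epsilon> \<le> 1" unfolding \<epsilon>_def using g K00 by (auto simp: field_simps)
        have "\<epsilon> * K0 \<le> (- inner (A x) (x - zs) / (2 * (K0 + 1))) * K0"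
          unfolding \<epsilon>_def by (rule mult_right_mono[OF min.cobounded2 K00])
        also have "\<dots> < - inner (A x) (x - zs)"
        proof -
          define G where "G = - inner (A x) (x - zs)"
          have G0: "G > 0" unfolding G_def using g by simp
          have k1: "K0 / (K0 + 1) \<le> 1" using K00 by simp
          have "G / (2 * (K0 + 1)) * K0 = (G / 2) * (K0 / (K0 + 1))" by simp
          also have "\<dots> \<le> (G / 2) * 1" using k1 G0 by (intro mult_left_mono) auto
          also have "\<dots> < G" using G0 by simp
          finally show ?thesis unfolding G_def .
        qed
        finally show False using stepb[OF ep] by linarith
      qed
    qed
    show ?thesis unfolding VI_sol_def
    proof (intro CollectI conjI ballI zsC)
      fix c' assume c'C: "c' \<in> C"
      define t where "t k = 1 / (real k + 1)" for k :: nat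
      have t01: "0 < t k" "t k \<le> 1" for k unfolding t_def by (auto simp: field_simps)
      have xt: "zs + t k *\<^sub>R (c' - zs) \<in> C" for k
      proof -
        have "(1 - t k) *\<^sub>R zs + t k *\<^sub>R c' \<in> C" using C_convex zsC c'C t01[of k] by (simp add: convex_def)
        moreover have "(1 - t k) *\<^sub>R zs + t k *\<^sub>R c' = zs + t k *\<^sub>R (c' - zs)" by (simp add: algebra_simps)
        ultimately show ?thesis by simp
      qed
      have pos: "inner (A (zs + t k *\<^sub>R (c' - zs))) (c' - zs) \<ge> 0" for k
      proof -
        have "0 \<le> inner (A (zs + t k *\<^sub>R (c' - zs))) ((zs + t k *\<^sub>R (c' - zs)) - zs)" by (rule minty[OF xt])
        also have "\<dots> = t k * inner (A (zs + t k *\<^sub>R (c' - zs))) (c' - zs)" by simp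
        finally show ?thesis using t01[of k] by (simp add: zero_le_mult_iff)
      qed
      have "(\<lambda>k. 1 / (real k + 1)) \<longlonglongrightarrow> 0"
        using LIMSEQ_inverse_real_of_nat by (simp add: inverse_eq_divide add.commute)
      moreover have "t = (\<lambda>k. 1 / (real k + 1))" by (rule ext) (simp add: t_def)
      ultimately have t0: "t \<longlonglongrightarrow> 0" by simp
      have "(\<lambda>k. zs + t k *\<^sub>R (c' - zs)) \<longlonglongrightarrow> zs + 0 *\<^sub>R (c' - zs)"
        by (rule tendsto_add[OF tendsto_const tendsto_scaleR[OF t0 tendsto_const]])
      hence lim1: "(\<lambda>k. zs + t k *\<^sub>R (c' - zs)) \<longlonglongrightarrow> zs" by simp
      have cA: "continuous_on UNIV A" using A_lip by (rule lipschitz_on_continuous_on)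
      have "(\<lambda>k. A (zs + t k *\<^sub>R (c' - zs))) \<longlonglongrightarrow> A zs"
        using continuous_on_tendsto_compose[OF cA lim1] by simp
      hence lim: "(\<lambda>k. inner (A (zs + t k *\<^sub>R (c' - zs))) (c' - zs)) \<longlonglongrightarrow> inner (A zs) (c' - zs)"
        by (rule tendsto_inner[OF _ tendsto_const])
      have "eventually (\<lambda>k. 0 \<le> inner (A (zs + t k *\<^sub>R (c' - zs))) (c' - zs)) sequentially"
        by (rule always_eventually) (use pos in blast)
      from tendsto_lowerbound[OF lim this trivial_limit_sequentially] show "inner (A zs) (c' - zs) \<ge> 0" .
    qed
  qed
qed

end
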